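(* Assume the setting described in the context, assume that $\mu$ is absolutely continuous with respect to $\lambda$, and let $\theta\in\mathbb{R}^{\mathfrak{d}}$, $i\in\{1,\dots,H\}$ satisfy $|\mathfrak{b}^\theta_i|+\sum_{j=1}^d|\mathfrak{w}^\theta_{i,j}|>0$. Then for every $j\in\{1,\dots,d\}$ the function $\mathbb{R}^{\mathfrak{d}}\ni\vartheta\mapsto\mathcal{G}_{(i-1)d+j}(\vartheta)\in\mathbb{R}$ is continuous at $\theta$, and the function $\mathbb{R}^{\mathfrak{d}}\ni\vartheta\mapsto\mathcal{G}_{Hd+i}(\vartheta)\in\mathbb{R}$ is continuous at $\theta$.
   Context: Setting: $d,H,\mathfrak{d}\in\mathbb{N}$ with $\mathfrak{d}=dH+2H+1$, $\mathscr{a}\in\mathbb{R}$, $\mathscr{b}\in(\mathscr{a},\infty)$, $f\in C([\mathscr{a},\mathscr{b}]^d,\mathbb{R})$. For $\theta=(\theta_1,\dots,\theta_{\mathfrak{d}})\in\mathbb{R}^{\mathfrak{d}}$, $i\in\{1,\dots,H\}$, $j\in\{1,\dots,d\}$ put $\mathfrak{w}^\theta_{i,j}=\theta_{(i-1)d+j}$, $\mathfrak{b}^\theta_i=\theta_{Hd+i}$, $\mathfrak{v}^\theta_i=\theta_{H(d+1)+i}$, $\mathfrak{c}^\theta=\theta_{\mathfrak{d}}$. Let $\mathfrak{R}_r\in C^1(\mathbb{R},\mathbb{R})$, $r\in\mathbb{N}$, satisfy for all $x\in\mathbb{R}$ that $\lim_{r\to\infty}\big(|\mathfrak{R}_r(x)-\max\{x,0\}|+|(\mathfrak{R}_r)'(x)-\mathbb{1}_{(0,\infty)}(x)|\big)=0$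 and $\sup_{r\in\mathbb{N}}\sup_{y\in[-|x|,|x|]}|(\mathfrak{R}_r)'(y)|<\infty$. Let $\mu$ be a finite measure on $\mathcal{B}([\mathscr{a},\mathscr{b}]^d)$ and $\lambda$ the Lebesgue–Borel measure on $[\mathscr{a},\mathscr{b}]^d$. For $r\in\mathbb{N}$, $\theta\in\mathbb{R}^{\mathfrak{d}}$ let $\mathfrak{L}_r(\theta)=\int_{[\mathscr{a},\mathscr{b}]^d}\big(f(y)-\mathfrak{c}^\theta-\sum_{i=1}^H\mathfrak{v}^\theta_i\,\mathfrak{R}_r(\mathfrak{b}^\theta_i+\sum_{j=1}^d\mathfrak{w}^\theta_{i,j}y_j)\big)^2\,\mu(\mathrm{d}y)$, and let $\mathcal{G}=(\mathcal{G}_1,\dots,\mathcal{G}_{\mathfrak{d}})\colon\mathbb{R}^{\mathfrak{d}}\to\mathbb{R}^{\mathfrak{d}}$ satisfy $\mathcal{G}(\theta)=\lim_{r\to\infty}(\nabla\mathfrak{L}_r)(\theta)$ for every $\theta$ for which this limit exists. *)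

theory Defs
  imports "HOL-Analysis.Analysis"
begin

text \<open>Parameter vectors in R^dd are modelled as extensional functions nat => real
  supported on the index set {1..dd}; points of [a,b]^d likewise on {1..d}.\<close>

definition param_space :: "nat \<Rightarrow> (nat \<Rightarrow> real) set" where
  "param_space dd = {\<theta>. \<forall>k. k \<notin> {1..dd} \<longrightarrow> \<theta> k = 0}"

definition cube :: "nat \<Rightarrow> real \<Rightarrow> real \<Rightarrow> (nat \<Rightarrow> real) set" where
  "cube d a b = PiE {1..d} (\<lambda>_. {a..b})"

definition leb_cube :: "nat \<Rightarrow> real \<Rightarrow> real \<Rightarrow> (nat \<Rightarrow> real) measure" where
  "leb_cube d a b = restrict_space (PiM {1..d} (\<lambda>_. lborel)) (cube d a b)"

definition wgt :: "nat \<Rightarrow> (nat \<Rightarrow> real) \<Rightarrow> nat \<Rightarrow> nat \<Rightarrow> real" where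
  "wgt d \<theta> i j = \<theta> ((i - 1) * d + j)"

definition bias :: "nat \<Rightarrow> nat \<Rightarrow> (nat \<Rightarrow> real) \<Rightarrow> nat \<Rightarrow> real" where
  "bias d H \<theta> i = \<theta> (H * d + i)"

definition outw :: "nat \<Rightarrow> nat \<Rightarrow> (nat \<Rightarrow> real) \<Rightarrow> nat \<Rightarrow> real" where
  "outw d H \<theta> i = \<theta> (H * (d + 1) + i)"

definition outb :: "nat \<Rightarrow> nat \<Rightarrow> (nat \<Rightarrow> real) \<Rightarrow> real" where
  "outb d H \<theta> = \<theta> (d * H + 2 * H + 1)"

definition risk :: "nat \<Rightarrow> nat \<Rightarrow> ((nat \<Rightarrow> real) \<Rightarrow> real) \<Rightarrow> (nat \<Rightarrow> real) measure
    \<Rightarrow> (real \<Rightarrow> real) \<Rightarrow> (nat \<Rightarrow> real) \<Rightarrow> real" where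
  "risk d H f \<mu> Rr \<theta> = integral\<^sup>L \<mu> (\<lambda>y. (f y - outb d H \<theta>
      - (\<Sum>i=1..H. outw d H \<theta> i * Rr (bias d H \<theta> i + (\<Sum>j=1..d. wgt d \<theta> i j * y j))))\<^sup>2)"

definition partial :: "((nat \<Rightarrow> real) \<Rightarrow> real) \<Rightarrow> (nat \<Rightarrow> real) \<Rightarrow> nat \<Rightarrow> real" where
  "partial F \<theta> k = deriv (\<lambda>t. F (\<theta>(k := \<theta> k + t))) 0"

end

theory Submission
  imports Defs "HOL-Analysis.Analysis"
begin


definition zz :: "nat \<Rightarrow> nat \<Rightarrow> (nat \<Rightarrow> real) \<Rightarrow> nat \<Rightarrow> (nat \<Rightarrow> real) \<Rightarrow> real" where
  "zz d H \<phi> l y = bias d H \<phi> l + (\<Sum>j=1..d. wgt d \<phi> l j * y j)"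

definition net :: "nat \<Rightarrow> nat \<Rightarrow> (real \<Rightarrow> real) \<Rightarrow> (nat \<Rightarrow> real) \<Rightarrow> (nat \<Rightarrow> real) \<Rightarrow> real" where
  "net d H \<rho> \<phi> y = outb d H \<phi> + (\<Sum>l=1..H. outw d H \<phi> l * \<rho> (zz d H \<phi> l y))"

definition ee :: "nat \<Rightarrow> nat \<Rightarrow> real" where "ee k m = (if m = k then 1 else 0)"

definition dz :: "nat \<Rightarrow> nat \<Rightarrow> nat \<Rightarrow> nat \<Rightarrow> (nat \<Rightarrow> real) \<Rightarrow> real" where
  "dz d H k l y = ee k (H * d + l) + (\<Sum>j=1..d. ee k ((l - 1) * d + j) * y j)"

definition dnet :: "nat \<Rightarrow> nat \<Rightarrow> (real \<Rightarrow> real) \<Rightarrow> (real \<Rightarrow> real) \<Rightarrow> (nat \<Rightarrow> real) \<Rightarrow> nat \<Rightarrow> (nat \<Rightarrow> real) \<Rightarrow> real" where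
  "dnet d H \<rho> \<rho>' \<phi> k y = ee k (d * H + 2 * H + 1) +
     (\<Sum>l=1..H. ee k (H * (d + 1) + l) * \<rho> (zz d H \<phi> l y) + outw d H \<phi> l * \<rho>' (zz d H \<phi> l y) * dz d H k l y)"

lemma risk_net: "risk d H f \<mu> \<rho> \<phi> = integral\<^sup>L \<mu> (\<lambda>y. (f y - net d H \<rho> \<phi> y)\<^sup>2)"
  unfolding risk_def net_def zz_def by (simp add: diff_diff_eq)

lemma upd_eq: "(\<phi>(k := \<phi> k + t)) m = \<phi> m + t * ee k m"
  by (simp add: ee_def)

lemma zz_upd: "zz d H (\<phi>(k := \<phi> k + t)) l y = zz d H \<phi> l y + t * dz d H k l y"
  unfolding zz_def dz_def bias_def wgt_def upd_eq
  by (simp add: algebra_simps sum.distrib sum_distrib_left)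

lemma net_upd: "net d H \<rho> (\<phi>(k := \<phi> k + t)) y =
   outb d H \<phi> + t * ee k (d * H + 2 * H + 1) +
   (\<Sum>l=1..H. (outw d H \<phi> l + t * ee k (H * (d + 1) + l)) * \<rho> (zz d H \<phi> l y + t * dz d H k l y))"
  unfolding net_def zz_upd outb_def outw_def upd_eq ..

lemma dnet_upd: "dnet d H \<rho> \<rho>' (\<phi>(k := \<phi> k + t)) k y =
   ee k (d * H + 2 * H + 1) +
   (\<Sum>l=1..H. ee k (H * (d + 1) + l) * \<rho> (zz d H \<phi> l y + t * dz d H k l y)
      + (outw d H \<phi> l + t * ee k (H * (d + 1) + l)) * \<rho>' (zz d H \<phi> l y + t * dz d H k l y) * dz d H k l y)"
  unfolding dnet_def zz_upd outw_def upd_eq ..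

lemma net_deriv:
  assumes "\<And>x. (\<rho> has_real_derivative \<rho>' x) (at x)"
  shows "((\<lambda>t. net d H \<rho> (\<phi>(k := \<phi> k + t)) y) has_real_derivative dnet d H \<rho> \<rho>' (\<phi>(k := \<phi> k + t0)) k y) (at t0)"
proof -
  have ch: "((\<lambda>t. \<rho> (g t)) has_real_derivative \<rho>' (g t) * D) (at t)"
    if "(g has_real_derivative D) (at t)" for g D t
    using DERIV_chain2[OF assms that] .
  show ?thesis
    unfolding net_upd dnet_upd
    apply (rule derivative_eq_intros ch refl | simp)+
    apply (simp add: algebra_simps)
    done
qed



lemma dct_ev:
  fixes s :: "nat \<Rightarrow> 'a \<Rightarrow> real"
  assumes "f \<in> borel_measurable M" "integrable M w"
    and "AE x in M. (\<lambda>n. s n x) \<longlonglongrightarrow> f x"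
    and "eventually (\<lambda>n. s n \<in> borel_measurable M \<and> (AE x in M. norm (s n x) \<le> w x)) sequentially"
  shows "(\<lambda>n. integral\<^sup>L M (s n)) \<longlonglongrightarrow> integral\<^sup>L M f"
proof -
  from assms(4) obtain N where N: "\<And>n. N \<le> n \<Longrightarrow> s n \<in> borel_measurable M \<and> (AE x in M. norm (s n x) \<le> w x)"
    by (auto simp: eventually_sequentially)
  show ?thesis
  proof (rule LIMSEQ_offset[where k=N], rule integral_dominated_convergence)
    show "AE x in M. norm (s (n + N) x) \<le> w x" for n using N[of "n+N"] by auto
    show "s (n + N) \<in> borel_measurable M" for n using N[of "n+N"] by auto
    show "AE x in M. (\<lambda>n. s (n + N) x) \<longlonglongrightarrow> f x"
      using assms(3) by eventually_elim (rule LIMSEQ_ignore_initial_segment)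
  qed (use assms in auto)
qed

lemma deriv_sq_int:
  fixes M :: "'a measure" and E E' :: "real \<Rightarrow> 'a \<Rightarrow> real"
  assumes fin: "finite_measure M"
    and meas: "\<And>t. E t \<in> borel_measurable M" and meas': "E' 0 \<in> borel_measurable M"
    and der: "\<And>y t. y \<in> space M \<Longrightarrow> ((\<lambda>s. E s y) has_real_derivative E' t y) (at t)"
    and bd: "\<And>y t. y \<in> space M \<Longrightarrow> t \<in> {-1..1} \<Longrightarrow> \<bar>E t y\<bar> \<le> B \<and> \<bar>E' t y\<bar> \<le> B'"
  shows "((\<lambda>t. \<integral>y. (E t y)\<^sup>2 \<partial>M) has_real_derivative (\<integral>y. 2 * E 0 y * E' 0 y \<partial>M)) (at 0)"
proof -
  interpret finite_measure M by (rule fin)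
  have B0: "0 \<le> B" "0 \<le> B'" if "space M \<noteq> {}"
    using that bd[of _ 0] by (auto intro: order_trans[OF abs_ge_zero])
  have intE: "integrable M (\<lambda>y. (E t y)\<^sup>2)" if "t \<in> {-1..1}" for t
  proof (rule integrable_const_bound[where B="B*B"])
    show "AE x in M. norm ((E t x)\<^sup>2) \<le> B * B"
    proof (rule AE_I2)
      fix x assume x: "x \<in> space M"
      then have "\<bar>E t x\<bar> \<le> B" using bd that by auto
      then have "\<bar>E t x\<bar>\<^sup>2 \<le> B\<^sup>2" by (intro power_mono) auto
      then show "norm ((E t x)\<^sup>2) \<le> B * B"
        by (simp add: power2_eq_square)
    qed
  qed (use meas in auto)
  define q where "q h y = ((E h y)\<^sup>2 - (E 0 y)\<^sup>2) / h" for h y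
  have dq: "((\<lambda>s. (E s y)\<^sup>2) has_real_derivative 2 * E t y * E' t y) (at t)" if "y \<in> space M" for y t
    using der[OF that, of t] by (auto intro!: derivative_eq_intros)
  show ?thesis
    unfolding has_field_derivative_iff
  proof (subst LIMSEQ_SEQ_conv[symmetric], intro allI impI, elim conjE)
    fix X :: "nat \<Rightarrow> real" assume X0: "\<forall>i. X i \<noteq> 0" and X: "X \<longlonglongrightarrow> 0"
    have ev1: "eventually (\<lambda>n. X n \<in> {-1..1}) sequentially"
    proof -
      have "eventually (\<lambda>n. dist (X n) 0 < 1) sequentially" using X by (rule tendstoD) simp
      then show ?thesis by eventually_elim (auto simp: dist_real_def)
    qed
    have "(\<lambda>n. integral\<^sup>L M (q (X n))) \<longlonglongrightarrow> (\<integral>y. 2 * E 0 y * E' 0 y \<partial>M)"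
    proof (rule dct_ev[where w="\<lambda>_. 2 * B * B'"])
      show "(\<lambda>y. 2 * E 0 y * E' 0 y) \<in> borel_measurable M" using meas meas' by measurable
      show "integrable M (\<lambda>_. 2 * B * B')" by simp
      show "AE x in M. (\<lambda>n. q (X n) x) \<longlonglongrightarrow> 2 * E 0 x * E' 0 x"
      proof (rule AE_I2)
        fix y assume y: "y \<in> space M"
        have "((\<lambda>h. ((E h y)\<^sup>2 - (E 0 y)\<^sup>2) / (h - 0)) \<longlongrightarrow> 2 * E 0 y * E' 0 y) (at 0)"
          using dq[OF y, of 0] unfolding has_field_derivative_iff by simp
        moreover have "filterlim X (at 0) sequentially"
          using X X0 by (intro filterlim_atI) auto
        ultimately show "(\<lambda>n. q (X n) y) \<longlonglongrightarrow> 2 * E 0 y * E' 0 y"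
          unfolding q_def using filterlim_compose by fastforce
      qed
      show "\<forall>\<^sub>F n in sequentially. q (X n) \<in> borel_measurable M \<and> (AE x in M. norm (q (X n) x) \<le> 2 * B * B')"
        using ev1
      proof eventually_elim
        case (elim n)
        have m: "q (X n) \<in> borel_measurable M" unfolding q_def using meas by measurable
        have "AE x in M. norm (q (X n) x) \<le> 2 * B * B'"
        proof (rule AE_I2)
          fix y assume y: "y \<in> space M"
          have "norm ((E (X n) y)\<^sup>2 - (E 0 y)\<^sup>2) \<le> (2 * B * B') * norm (X n - 0)"
          proof (rule field_differentiable_bound[where S="{-1..1}" and f="\<lambda>s. (E s y)\<^sup>2" and f'="\<lambda>t. 2 * E t y * E' t y"])
            show "((\<lambda>s. (E s y)\<^sup>2) has_field_derivative 2 * E z y * E' z y) (at z within {-1..1})" for z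
              using dq[OF y] by (rule has_field_derivative_at_within)
            show "norm (2 * E z y * E' z y) \<le> 2 * B * B'" if "z \<in> {-1..1}" for z
            proof -
              have "\<bar>E z y\<bar> \<le> B" "\<bar>E' z y\<bar> \<le> B'" using bd[OF y that] by auto
              then show ?thesis by (simp add: abs_mult mult_mono' mult.assoc)
            qed
          qed (use elim in auto)
          then show "norm (q (X n) y) \<le> 2 * B * B'"
            using X0 by (simp add: q_def divide_le_eq abs_divide)
        qed
        with m show ?case by simp
      qed
    qed
    moreover have "eventually (\<lambda>n. integral\<^sup>L M (q (X n)) = ((\<lambda>h. ((\<integral>y. (E h y)\<^sup>2 \<partial>M) - (\<integral>y. (E 0 y)\<^sup>2 \<partial>M)) / (h - 0))) (X n)) sequentially"
      using ev1
    proof eventually_elim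
      case (elim n)
      show ?case unfolding q_def
        using intE[OF elim] intE[of 0] by (simp add: integral_diff)
    qed
    ultimately show "(\<lambda>n. (\<lambda>h. ((\<integral>y. (E h y)\<^sup>2 \<partial>M) - (\<integral>y. (E 0 y)\<^sup>2 \<partial>M)) / (h - 0)) (X n)) \<longlonglongrightarrow> (\<integral>y. 2 * E 0 y * E' 0 y \<partial>M)"
      using Lim_transform_eventually by fastforce
  qed
qed



lemma space_leb_cube: "space (leb_cube d a b) = cube d a b"
  unfolding leb_cube_def cube_def by (auto simp: space_restrict_space space_PiM PiE_iff)

lemma cube_sets: "cube d a b \<in> sets (PiM {1..d} (\<lambda>_. lborel::real measure))"
  unfolding cube_def by (rule sets_PiM_I_finite) auto

lemma coord_meas: "(\<lambda>y. y j) \<in> borel_measurable (leb_cube d a b)"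
proof (cases "j \<in> {1..d}")
  case True
  have "(\<lambda>y. y j) \<in> borel_measurable (PiM {1..d} (\<lambda>_. lborel::real measure))"
    using measurable_component_singleton[OF True, of "\<lambda>_. lborel"] by simp
  then show ?thesis unfolding leb_cube_def by (rule measurable_restrict_space1)
next
  case False
  have "(\<lambda>y. y j) \<in> borel_measurable (PiM {1..d} (\<lambda>_. lborel::real measure))"
    by (rule measurable_cong[where f="\<lambda>_. undefined", THEN iffD1])
       (use False in \<open>auto simp: space_PiM PiE_iff extensional_def\<close>)
  then show ?thesis unfolding leb_cube_def by (rule measurable_restrict_space1)
qed

lemma id_meas: "(\<lambda>y::nat\<Rightarrow>real. y) \<in> borel_measurable (PiM {1..d} (\<lambda>_. lborel::real measure))"
proof (rule measurable_coordinatewise_then_product[where f="\<lambda>y. y"])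
  fix j :: nat
  show "(\<lambda>y. y j) \<in> borel_measurable (PiM {1..d} (\<lambda>_. lborel::real measure))"
  proof (cases "j \<in> {1..d}")
    case True
    show ?thesis using measurable_component_singleton[OF True, of "\<lambda>_. lborel"] by simp
  next
    case False
    show ?thesis
      by (rule measurable_cong[where f="\<lambda>_. undefined", THEN iffD1])
         (use False in \<open>auto simp: space_PiM PiE_iff extensional_def\<close>)
  qed
qed

lemma f_meas:
  assumes "continuous_on (cube d a b) f"
  shows "f \<in> borel_measurable (leb_cube d a b)"
proof -
  have "(\<lambda>y. y) \<in> measurable (leb_cube d a b) (restrict_space borel (cube d a b))"
    unfolding leb_cube_def by (rule measurable_restrict_space3[OF id_meas]) auto
  moreover have "f \<in> borel_measurable (restrict_space borel (cube d a b))"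
    by (rule borel_measurable_continuous_on_restrict[OF assms])
  ultimately show ?thesis using measurable_comp by fastforce
qed

lemma cube_compact: "compact (cube d a b)"
proof -
  define S where "S n = (if n \<in> {1..d} then {a..b} else {undefined})" for n :: nat
  have eq: "cube d a b = PiE UNIV S"
  proof (rule set_eqI)
    fix x :: "nat \<Rightarrow> real"
    show "x \<in> cube d a b \<longleftrightarrow> x \<in> PiE UNIV S"
      unfolding cube_def S_def by (auto simp: PiE_iff extensional_def)
  qed
  have "compactin (product_topology (\<lambda>_. euclidean) UNIV) (PiE UNIV S)"
    unfolding compactin_PiE by (auto simp: S_def)
  then show ?thesis unfolding eq euclidean_product_topology by simp
qed

lemma f_bounded:
  fixes f :: "(nat \<Rightarrow> real) \<Rightarrow> real"
  assumes "continuous_on (cube d a b) f"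
  obtains Fb where "\<And>y. y \<in> cube d a b \<Longrightarrow> \<bar>f y\<bar> \<le> Fb"
proof -
  have "compact (f ` cube d a b)" by (rule compact_continuous_image[OF assms cube_compact])
  then have "bounded (f ` cube d a b)" by (rule compact_imp_bounded)
  then obtain Fb where "\<And>x. x \<in> f ` cube d a b \<Longrightarrow> norm x \<le> Fb" unfolding bounded_iff by blast
  then show ?thesis using that by force
qed

lemma cube_coord_bound:
  assumes "y \<in> cube d a b" "j \<in> {1..d}"
  shows "\<bar>y j\<bar> \<le> max \<bar>a\<bar> \<bar>b\<bar>"
proof -
  have "a \<le> y j \<and> y j \<le> b" using assms unfolding cube_def by (auto simp: PiE_iff)
  then show ?thesis by linarith
qed



lemma hyperplane_null:
  fixes w :: "nat \<Rightarrow> real" and c :: real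
  assumes j0: "j0 \<in> {1..d}" and w0: "w j0 \<noteq> 0"
  shows "{y \<in> space (PiM {1..d} (\<lambda>_. lborel::real measure)). c + (\<Sum>j=1..d. w j * y j) = 0}
           \<in> null_sets (PiM {1..d} (\<lambda>_. lborel::real measure))"
    (is "?A \<in> null_sets ?P")
proof -
  interpret product_sigma_finite "\<lambda>_. lborel::real measure"
    by unfold_locales
  define I where "I = {1..d} - {j0}"
  have ins: "{1..d} = insert j0 I" and finI: "finite I" and j0I: "j0 \<notin> I"
    using j0 by (auto simp: I_def)
  have coordm: "(\<lambda>y. y j) \<in> borel_measurable ?P" if "j \<in> {1..d}" for j
    using measurable_component_singleton[OF that, of "\<lambda>_. lborel::real measure"] by simp
  have Am: "?A \<in> sets ?P"
  proof -
    have "(\<lambda>y. c + (\<Sum>j=1..d. w j * y j)) \<in> borel_measurable ?P"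
      using coordm by (intro borel_measurable_add borel_measurable_sum borel_measurable_times) auto
    then show ?thesis by measurable
  qed
  have "emeasure ?P ?A = (\<integral>\<^sup>+ y. indicator ?A y \<partial>?P)" using Am by simp
  also have "\<dots> = (\<integral>\<^sup>+ x. (\<integral>\<^sup>+ s. indicator ?A (x(j0 := s)) \<partial>(lborel::real measure)) \<partial>(PiM I (\<lambda>_. lborel::real measure)))"
    unfolding ins by (rule product_nn_integral_insert[OF finI j0I]) (use Am ins in simp)
  also have "\<dots> = (\<integral>\<^sup>+ x. 0 \<partial>(PiM I (\<lambda>_. lborel::real measure)))"
  proof (rule nn_integral_cong)
    fix x assume x: "x \<in> space (PiM I (\<lambda>_. lborel::real measure))"
    define s0 where "s0 = - (c + (\<Sum>j\<in>I. w j * x j)) / w j0"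
    have "indicator ?A (x(j0 := s)) = (indicator {s0} s :: ennreal)" for s
    proof -
      have sp: "x(j0 := s) \<in> space ?P" using x unfolding ins by (auto simp: space_PiM PiE_iff extensional_def)
      have "(\<Sum>j=1..d. w j * (x(j0 := s)) j) = w j0 * s + (\<Sum>j\<in>I. w j * x j)"
        unfolding ins using finI j0I by (simp add: sum.insert) (rule sum.cong, auto)
      then have "(c + (\<Sum>j=1..d. w j * (x(j0 := s)) j) = 0) \<longleftrightarrow> s = s0"
        unfolding s0_def using w0 by (auto simp: field_simps)
      then show ?thesis using sp by (simp add: indicator_def)
    qed
    then show "(\<integral>\<^sup>+ s. indicator ?A (x(j0 := s)) \<partial>lborel) = 0" by simp
  qed
  also have "\<dots> = 0" by simp
  finally show ?thesis using Am by (simp add: null_sets_def)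
qed



lemma ee_abs: "\<bar>ee k m\<bar> \<le> 1" by (simp add: ee_def)

lemma sum_abs_bound:
  fixes g :: "nat \<Rightarrow> real"
  assumes "\<And>j. j \<in> {1..n} \<Longrightarrow> \<bar>g j\<bar> \<le> K"
  shows "\<bar>\<Sum>j=1..n. g j\<bar> \<le> real n * K"
proof -
  have "\<bar>\<Sum>j=1..n. g j\<bar> \<le> (\<Sum>j=1..n. \<bar>g j\<bar>)" by (rule sum_abs)
  also have "\<dots> \<le> real (card {1..n}) * K" by (rule sum_bounded_above) (use assms in auto)
  finally show ?thesis by simp
qed

lemma abs_mult_le:
  fixes x y :: real
  assumes "\<bar>x\<bar> \<le> A" "\<bar>y\<bar> \<le> B"
  shows "\<bar>x * y\<bar> \<le> A * B"
  unfolding abs_mult using assms by (intro mult_mono) auto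

lemma zz_bound:
  assumes P: "\<forall>m. \<bar>\<phi> m\<bar> \<le> P" and Y: "\<forall>j\<in>{1..d}. \<bar>y j\<bar> \<le> Mb"
  shows "\<bar>zz d H \<phi> l y\<bar> \<le> P + real d * (P * Mb)"
proof -
  have "\<bar>(\<Sum>j=1..d. wgt d \<phi> l j * y j)\<bar> \<le> real d * (P * Mb)"
    by (rule sum_abs_bound) (use P Y in \<open>auto simp: wgt_def intro!: abs_mult_le\<close>)
  moreover have "\<bar>bias d H \<phi> l\<bar> \<le> P" using P by (simp add: bias_def)
  ultimately show ?thesis unfolding zz_def by linarith
qed

lemma dz_bound:
  assumes Y: "\<forall>j\<in>{1..d}. \<bar>y j\<bar> \<le> Mb"
  shows "\<bar>dz d H k l y\<bar> \<le> 1 + real d * (1 * Mb)"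
proof -
  have "\<bar>(\<Sum>j=1..d. ee k ((l - 1) * d + j) * y j)\<bar> \<le> real d * (1 * Mb)"
  proof (rule sum_abs_bound)
    fix j assume j: "j \<in> {1..d}"
    show "\<bar>ee k ((l - 1) * d + j) * y j\<bar> \<le> 1 * Mb"
      by (rule abs_mult_le[OF ee_abs]) (use Y j in auto)
  qed
  then show ?thesis unfolding dz_def using ee_abs[of k "H * d + l"] by linarith
qed

lemma net_bound:
  assumes P: "\<forall>m. \<bar>\<phi> m\<bar> \<le> P" and Y: "\<forall>j\<in>{1..d}. \<bar>y j\<bar> \<le> Mb"
    and A: "\<forall>x. \<bar>x\<bar> \<le> P + real d * (P * Mb) \<longrightarrow> \<bar>\<rho> x\<bar> \<le> A"
  shows "\<bar>net d H \<rho> \<phi> y\<bar> \<le> P + real H * (P * A)"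
proof -
  have "\<bar>(\<Sum>l=1..H. outw d H \<phi> l * \<rho> (zz d H \<phi> l y))\<bar> \<le> real H * (P * A)"
    by (rule sum_abs_bound) (use P A zz_bound[OF P Y] in \<open>auto simp: outw_def intro!: abs_mult_le\<close>)
  moreover have "\<bar>outb d H \<phi>\<bar> \<le> P" using P by (simp add: outb_def)
  ultimately show ?thesis unfolding net_def by linarith
qed

lemma dnet_bound:
  assumes P: "\<forall>m. \<bar>\<phi> m\<bar> \<le> P" and Y: "\<forall>j\<in>{1..d}. \<bar>y j\<bar> \<le> Mb"
    and A: "\<forall>x. \<bar>x\<bar> \<le> P + real d * (P * Mb) \<longrightarrow> \<bar>\<rho> x\<bar> \<le> A"
    and A': "\<forall>x. \<bar>x\<bar> \<le> P + real d * (P * Mb) \<longrightarrow> \<bar>\<rho>' x\<bar> \<le> A'"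
  shows "\<bar>dnet d H \<rho> \<rho>' \<phi> k y\<bar> \<le> 1 + real H * (1 * A + P * A' * (1 + real d * (1 * Mb)))"
proof -
  have "\<bar>(\<Sum>l=1..H. ee k (H * (d + 1) + l) * \<rho> (zz d H \<phi> l y) + outw d H \<phi> l * \<rho>' (zz d H \<phi> l y) * dz d H k l y)\<bar>
      \<le> real H * (1 * A + P * A' * (1 + real d * (1 * Mb)))"
  proof (rule sum_abs_bound)
    fix l assume l: "l \<in> {1..H}"
    have "\<bar>ee k (H * (d + 1) + l) * \<rho> (zz d H \<phi> l y)\<bar> \<le> 1 * A"
      using A zz_bound[OF P Y] by (intro abs_mult_le ee_abs) auto
    moreover have "\<bar>outw d H \<phi> l * \<rho>' (zz d H \<phi> l y) * dz d H k l y\<bar> \<le> P * A' * (1 + real d * (1 * Mb))"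
      using P A' zz_bound[OF P Y] dz_bound[OF Y] by (intro abs_mult_le) (auto simp: outw_def)
    ultimately show "\<bar>ee k (H * (d + 1) + l) * \<rho> (zz d H \<phi> l y) + outw d H \<phi> l * \<rho>' (zz d H \<phi> l y) * dz d H k l y\<bar>
      \<le> 1 * A + P * A' * (1 + real d * (1 * Mb))" by linarith
  qed
  then show ?thesis unfolding dnet_def using ee_abs[of k "d * H + 2 * H + 1"] by linarith
qed

lemma upd_bound:
  fixes \<phi> :: "nat \<Rightarrow> real"
  assumes "\<forall>m. \<bar>\<phi> m\<bar> \<le> P" "\<bar>t\<bar> \<le> 1"
  shows "\<forall>m. \<bar>(\<phi>(k := \<phi> k + t)) m\<bar> \<le> P + 1"
proof
  fix m
  have "\<bar>\<phi> m\<bar> \<le> P" using assms by auto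
  then show "\<bar>(\<phi>(k := \<phi> k + t)) m\<bar> \<le> P + 1" using assms(2) by (cases "m = k") (auto simp: abs_le_iff)
qed



lemma net_tendsto_act:
  assumes "\<And>x. ((\<lambda>r. \<rho>s r x) \<longlongrightarrow> \<rho> x) F"
  shows "((\<lambda>r. net d H (\<rho>s r) \<phi> y) \<longlongrightarrow> net d H \<rho> \<phi> y) F"
  unfolding net_def by (intro tendsto_intros assms)

lemma dnet_tendsto_act:
  assumes "\<And>x. ((\<lambda>r. \<rho>s r x) \<longlongrightarrow> \<rho> x) F" "\<And>x. ((\<lambda>r. \<rho>s' r x) \<longlongrightarrow> \<rho>' x) F"
  shows "((\<lambda>r. dnet d H (\<rho>s r) (\<rho>s' r) \<phi> k y) \<longlongrightarrow> dnet d H \<rho> \<rho>' \<phi> k y) F"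
  unfolding dnet_def by (intro tendsto_intros assms)

lemma zz_tendsto_par:
  assumes "\<And>m. ((\<lambda>n. u n m) \<longlongrightarrow> \<theta> m) F"
  shows "((\<lambda>n. zz d H (u n) l y) \<longlongrightarrow> zz d H \<theta> l y) F"
  unfolding zz_def bias_def wgt_def by (intro tendsto_intros assms)

lemma net_tendsto_par:
  assumes "\<And>m. ((\<lambda>n. u n m) \<longlongrightarrow> \<theta> m) F" "\<And>x. isCont \<rho> x"
  shows "((\<lambda>n. net d H \<rho> (u n) y) \<longlongrightarrow> net d H \<rho> \<theta> y) F"
  unfolding net_def outb_def outw_def
  by (intro tendsto_intros assms isCont_tendsto_compose[OF assms(2)] zz_tendsto_par)

lemma ind_tendsto:
  assumes "(g \<longlongrightarrow> z) F" "z \<noteq> (0::real)"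
  shows "((\<lambda>n. indicator {0<..} (g n) :: real) \<longlongrightarrow> indicator {0<..} z) F"
proof (cases "z > 0")
  case True
  have "eventually (\<lambda>n. g n > 0) F" using order_tendstoD(1)[OF assms(1) True] .
  then have "eventually (\<lambda>n. (indicator {0<..} (g n) :: real) = indicator {0<..} z) F"
    by eventually_elim (use True in auto)
  then show ?thesis by (rule tendsto_eventually)
next
  case False
  then have z: "z < 0" using assms(2) by auto
  have "eventually (\<lambda>n. g n < 0) F" using order_tendstoD(2)[OF assms(1) z] .
  then have "eventually (\<lambda>n. (indicator {0<..} (g n) :: real) = indicator {0<..} z) F"
    by eventually_elim (use z in auto)
  then show ?thesis by (rule tendsto_eventually)
qed

lemma dnet_tendsto_par:
  assumes "\<And>m. ((\<lambda>n. u n m) \<longlongrightarrow> \<theta> m) F"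
    and "\<forall>l\<in>{1..H}. dz d H k l y \<noteq> 0 \<longrightarrow> zz d H \<theta> l y \<noteq> 0"
  shows "((\<lambda>n. dnet d H (\<lambda>x. max x 0) (indicator {0<..}) (u n) k y) \<longlongrightarrow>
           dnet d H (\<lambda>x. max x 0) (indicator {0<..}) \<theta> k y) F"
  unfolding dnet_def
proof (intro tendsto_add tendsto_const tendsto_sum)
  fix l assume l: "l \<in> {1..H}"
  show "((\<lambda>n. ee k (H * (d + 1) + l) * max (zz d H (u n) l y) 0) \<longlongrightarrow> ee k (H * (d + 1) + l) * max (zz d H \<theta> l y) 0) F"
    by (intro tendsto_intros zz_tendsto_par assms)
  show "((\<lambda>n. outw d H (u n) l * indicator {0<..} (zz d H (u n) l y) * dz d H k l y) \<longlongrightarrow>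
          outw d H \<theta> l * indicator {0<..} (zz d H \<theta> l y) * dz d H k l y) F"
  proof (cases "dz d H k l y = 0")
    case True
    then show ?thesis by simp
  next
    case False
    then have "zz d H \<theta> l y \<noteq> 0" using assms(2) l by auto
    then show ?thesis unfolding outw_def
      by (intro tendsto_intros assms ind_tendsto zz_tendsto_par)
  qed
qed



locale nnset =
  fixes d H :: nat and a b :: real and f :: "(nat \<Rightarrow> real) \<Rightarrow> real"
    and R :: "nat \<Rightarrow> real \<Rightarrow> real" and \<mu> :: "(nat \<Rightarrow> real) measure"
  assumes f_cont: "continuous_on (cube d a b) f"
    and R_C1: "\<forall>r\<ge>1. (\<forall>x. R r differentiable at x) \<and> continuous_on UNIV (deriv (R r))"
    and R_lim: "\<forall>x. (\<lambda>r. \<bar>R r x - max x 0\<bar> + \<bar>deriv (R r) x - indicator {0<..} x\<bar>) \<longlonglongrightarrow> 0"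
    and R_bd: "\<forall>x. \<exists>C. \<forall>r\<ge>1. \<forall>y\<in>{-\<bar>x\<bar>..\<bar>x\<bar>}. \<bar>deriv (R r) y\<bar> \<le> C"
    and mu_sets: "sets \<mu> = sets (leb_cube d a b)"
    and mu_fin: "finite_measure \<mu>"
begin

lemma sp: "space \<mu> = cube d a b"
  using sets_eq_imp_space_eq[OF mu_sets] space_leb_cube by simp

lemma coord_mu[measurable]: "(\<lambda>y. y j) \<in> borel_measurable \<mu>"
  using coord_meas measurable_cong_sets[OF mu_sets refl] by blast

lemma f_mu[measurable]: "f \<in> borel_measurable \<mu>"
  using f_meas[OF f_cont] measurable_cong_sets[OF mu_sets refl] by blast

definition "Mb = max \<bar>a\<bar> \<bar>b\<bar>"

lemma Y: "y \<in> space \<mu> \<Longrightarrow> \<forall>j\<in>{1..d}. \<bar>y j\<bar> \<le> Mb"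
  unfolding sp Mb_def using cube_coord_bound by blast

lemma Fb_ex: "\<exists>Fb. \<forall>y\<in>space \<mu>. \<bar>f y\<bar> \<le> Fb"
  using f_bounded[OF f_cont] unfolding sp by metis

lemma net_meas:
  assumes [measurable]: "\<rho> \<in> borel_measurable borel"
  shows "(\<lambda>y. net d H \<rho> \<phi> y) \<in> borel_measurable \<mu>"
  unfolding net_def zz_def by measurable

lemma dnet_meas:
  assumes [measurable]: "\<rho> \<in> borel_measurable borel" "\<rho>' \<in> borel_measurable borel"
  shows "(\<lambda>y. dnet d H \<rho> \<rho>' \<phi> k y) \<in> borel_measurable \<mu>"
  unfolding dnet_def zz_def dz_def by measurable

lemma R_der: "r \<ge> 1 \<Longrightarrow> (R r has_real_derivative deriv (R r) x) (at x)"
  using R_C1 DERIV_deriv_iff_real_differentiable by blast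

lemma R_meas: assumes "r \<ge> 1" shows "R r \<in> borel_measurable borel"
proof -
  have "continuous_on UNIV (R r)"
    using R_der[OF assms] by (meson DERIV_isCont continuous_at_imp_continuous_on)
  then show ?thesis by (rule borel_measurable_continuous_onI)
qed

lemma dR_meas: "r \<ge> 1 \<Longrightarrow> deriv (R r) \<in> borel_measurable borel"
  using R_C1 by (intro borel_measurable_continuous_onI) auto

lemma R_conv: "(\<lambda>r. R r x) \<longlonglongrightarrow> max x 0"
proof -
  have "(\<lambda>r. \<bar>R r x - max x 0\<bar>) \<longlonglongrightarrow> 0"
    by (rule tendsto_sandwich[OF _ _ tendsto_const R_lim[rule_format, of x]]) auto
  then show ?thesis by (simp add: LIM_zero_iff tendsto_rabs_zero_iff)
qed

lemma dR_conv: "(\<lambda>r. deriv (R r) x) \<longlonglongrightarrow> indicator {0<..} x"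
proof -
  have "(\<lambda>r. \<bar>deriv (R r) x - indicator {0<..} x\<bar>) \<longlonglongrightarrow> 0"
    by (rule tendsto_sandwich[OF _ _ tendsto_const R_lim[rule_format, of x]]) auto
  then show ?thesis by (simp add: LIM_zero_iff tendsto_rabs_zero_iff)
qed

lemma R_bounds: "\<exists>A A'. \<forall>r\<ge>1. \<forall>x. \<bar>x\<bar> \<le> X \<longrightarrow> \<bar>R r x\<bar> \<le> A \<and> \<bar>deriv (R r) x\<bar> \<le> A'"
proof -
  obtain C where C: "\<And>r y. r \<ge> 1 \<Longrightarrow> y \<in> {-\<bar>X\<bar>..\<bar>X\<bar>} \<Longrightarrow> \<bar>deriv (R r) y\<bar> \<le> C"
    using R_bd by metis
  have "Bseq (\<lambda>r. R r 0)" using R_conv[of 0] by (intro convergent_imp_Bseq) (auto simp: convergent_def)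
  then obtain K where K: "\<And>r. \<bar>R r 0\<bar> \<le> K" by (auto simp: Bseq_def)
  show ?thesis
  proof (intro exI allI impI conjI)
    fix r :: nat and x :: real assume r: "r \<ge> 1" and x: "\<bar>x\<bar> \<le> X"
    then have xS: "x \<in> {-\<bar>X\<bar>..\<bar>X\<bar>}" by auto
    have "norm (R r x - R r 0) \<le> C * norm (x - 0)"
    proof (rule field_differentiable_bound[where S="{-\<bar>X\<bar>..\<bar>X\<bar>}" and f'="deriv (R r)"])
      show "(R r has_field_derivative deriv (R r) z) (at z within {-\<bar>X\<bar>..\<bar>X\<bar>})" for z
        using R_der[OF r] by (rule has_field_derivative_at_within)
      show "norm (deriv (R r) z) \<le> C" if "z \<in> {-\<bar>X\<bar>..\<bar>X\<bar>}" for z using C[OF r that] by simp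
    qed (use xS in auto)
    moreover have "0 \<le> C" using C[OF r, of 0] by auto
    ultimately have "\<bar>R r x - R r 0\<bar> \<le> C * \<bar>X\<bar>"
      using x by (smt (verit) mult_left_mono real_norm_def)
    then show "\<bar>R r x\<bar> \<le> K + C * \<bar>X\<bar>" using K[of r] by linarith
    show "\<bar>deriv (R r) x\<bar> \<le> C" using C[OF r xS] .
  qed
qed

end


context nnset begin

lemma partial_eq:
  assumes r: "r \<ge> 1" and P: "\<forall>m. \<bar>\<phi> m\<bar> \<le> P"
  shows "partial (risk d H f \<mu> (R r)) \<phi> k =
    (\<integral>y. 2 * (f y - net d H (R r) \<phi> y) * (- dnet d H (R r) (deriv (R r)) \<phi> k y) \<partial>\<mu>)"
proof -
  obtain Fb where Fb: "\<forall>y\<in>space \<mu>. \<bar>f y\<bar> \<le> Fb" using Fb_ex by blast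
  define P1 where "P1 = P + 1"
  obtain A A' where AA: "\<forall>r\<ge>1. \<forall>x. \<bar>x\<bar> \<le> P1 + real d * (P1 * Mb) \<longrightarrow> \<bar>R r x\<bar> \<le> A \<and> \<bar>deriv (R r) x\<bar> \<le> A'"
    using R_bounds by blast
  define E where "E t y = f y - net d H (R r) (\<phi>(k := \<phi> k + t)) y" for t y
  define E' where "E' t y = - dnet d H (R r) (deriv (R r)) (\<phi>(k := \<phi> k + t)) k y" for t y
  have "((\<lambda>t. \<integral>y. (E t y)\<^sup>2 \<partial>\<mu>) has_real_derivative (\<integral>y. 2 * E 0 y * E' 0 y \<partial>\<mu>)) (at 0)"
  proof (rule deriv_sq_int[where B="Fb + (P1 + real H * (P1 * A))" and B'="1 + real H * (1 * A + P1 * A' * (1 + real d * (1 * Mb)))"])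
    show "finite_measure \<mu>" by (rule mu_fin)
    show "E t \<in> borel_measurable \<mu>" for t
      unfolding E_def using net_meas[OF R_meas[OF r]] by measurable
    show "E' 0 \<in> borel_measurable \<mu>"
      unfolding E'_def using dnet_meas[OF R_meas[OF r] dR_meas[OF r]] by measurable
    show "((\<lambda>s. E s y) has_real_derivative E' t y) (at t)" if "y \<in> space \<mu>" for y t
      unfolding E_def E'_def
      by (rule derivative_eq_intros net_deriv R_der[OF r] | simp)+
    show "\<bar>E t y\<bar> \<le> Fb + (P1 + real H * (P1 * A)) \<and>
          \<bar>E' t y\<bar> \<le> 1 + real H * (1 * A + P1 * A' * (1 + real d * (1 * Mb)))"
      if y: "y \<in> space \<mu>" and t: "t \<in> {-1..1}" for y t
    proof -
      have Pt: "\<forall>m. \<bar>(\<phi>(k := \<phi> k + t)) m\<bar> \<le> P1"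
        unfolding P1_def using t by (intro upd_bound P) auto
      have "\<bar>net d H (R r) (\<phi>(k := \<phi> k + t)) y\<bar> \<le> P1 + real H * (P1 * A)"
        by (rule net_bound[OF Pt Y[OF y]]) (use AA r in auto)
      moreover have "\<bar>dnet d H (R r) (deriv (R r)) (\<phi>(k := \<phi> k + t)) k y\<bar>
          \<le> 1 + real H * (1 * A + P1 * A' * (1 + real d * (1 * Mb)))"
        by (rule dnet_bound[OF Pt Y[OF y]]) (use AA r in auto)
      moreover have "\<bar>f y\<bar> \<le> Fb" using Fb y by auto
      ultimately show ?thesis unfolding E_def E'_def by auto
    qed
  qed
  then have "deriv (\<lambda>t. \<integral>y. (E t y)\<^sup>2 \<partial>\<mu>) 0 = (\<integral>y. 2 * E 0 y * E' 0 y \<partial>\<mu>)"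
    by (rule DERIV_imp_deriv)
  then show ?thesis
    unfolding partial_def risk_net E_def E'_def by simp
qed

definition "Gf \<phi> k = (\<integral>y. 2 * (f y - net d H (\<lambda>x. max x 0) \<phi> y) *
     (- dnet d H (\<lambda>x. max x 0) (indicator {0<..}) \<phi> k y) \<partial>\<mu>)"

lemma mx_meas: "(\<lambda>x::real. max x 0) \<in> borel_measurable borel" by measurable
lemma ind_meas: "(indicator {0<..} :: real \<Rightarrow> real) \<in> borel_measurable borel" by measurable

lemma G_lim:
  assumes P: "\<forall>m. \<bar>\<phi> m\<bar> \<le> P"
  shows "(\<lambda>r. partial (risk d H f \<mu> (R r)) \<phi> k) \<longlonglongrightarrow> Gf \<phi> k"
proof -
  obtain Fb where Fb: "\<forall>y\<in>space \<mu>. \<bar>f y\<bar> \<le> Fb" using Fb_ex by blast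
  obtain A A' where AA: "\<forall>r\<ge>1. \<forall>x. \<bar>x\<bar> \<le> P + real d * (P * Mb) \<longrightarrow> \<bar>R r x\<bar> \<le> A \<and> \<bar>deriv (R r) x\<bar> \<le> A'"
    using R_bounds by blast
  define s where "s r y = 2 * (f y - net d H (R r) \<phi> y) * (- dnet d H (R r) (deriv (R r)) \<phi> k y)" for r y
  define W where "W = 2 * (Fb + (P + real H * (P * A))) * (1 + real H * (1 * A + P * A' * (1 + real d * (1 * Mb))))"
  have "(\<lambda>r. integral\<^sup>L \<mu> (s r)) \<longlonglongrightarrow> Gf \<phi> k"
    unfolding Gf_def
  proof (rule dct_ev[where w="\<lambda>_. W"])
    show "(\<lambda>y. 2 * (f y - net d H (\<lambda>x. max x 0) \<phi> y) * (- dnet d H (\<lambda>x. max x 0) (indicator {0<..}) \<phi> k y))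
       \<in> borel_measurable \<mu>"
      using net_meas[OF mx_meas] dnet_meas[OF mx_meas ind_meas] by measurable
    show "integrable \<mu> (\<lambda>_. W)" using mu_fin finite_measure.integrable_const by blast
    show "AE y in \<mu>. (\<lambda>r. s r y) \<longlonglongrightarrow> 2 * (f y - net d H (\<lambda>x. max x 0) \<phi> y) * (- dnet d H (\<lambda>x. max x 0) (indicator {0<..}) \<phi> k y)"
      unfolding s_def
      by (intro AE_I2 tendsto_intros net_tendsto_act dnet_tendsto_act R_conv dR_conv)
    show "\<forall>\<^sub>F r in sequentially. s r \<in> borel_measurable \<mu> \<and> (AE y in \<mu>. norm (s r y) \<le> W)"
      using eventually_ge_at_top[of "1::nat"]
    proof eventually_elim
      case (elim r)
      have m: "s r \<in> borel_measurable \<mu>"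
        unfolding s_def using net_meas[OF R_meas[OF elim]] dnet_meas[OF R_meas[OF elim] dR_meas[OF elim]] by measurable
      have "norm (s r y) \<le> W" if y: "y \<in> space \<mu>" for y
      proof -
        have "\<bar>net d H (R r) \<phi> y\<bar> \<le> P + real H * (P * A)"
          by (rule net_bound[OF P Y[OF y]]) (use AA elim in auto)
        moreover have "\<bar>dnet d H (R r) (deriv (R r)) \<phi> k y\<bar> \<le> 1 + real H * (1 * A + P * A' * (1 + real d * (1 * Mb)))"
          by (rule dnet_bound[OF P Y[OF y]]) (use AA elim in auto)
        moreover have "\<bar>f y\<bar> \<le> Fb" using Fb y by auto
        ultimately have "\<bar>2 * (f y - net d H (R r) \<phi> y)\<bar> \<le> 2 * (Fb + (P + real H * (P * A)))"
          and "\<bar>- dnet d H (R r) (deriv (R r)) \<phi> k y\<bar> \<le> 1 + real H * (1 * A + P * A' * (1 + real d * (1 * Mb)))"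
          by auto
        then show ?thesis unfolding s_def W_def real_norm_def by (rule abs_mult_le)
      qed
      with m show ?case by (auto intro!: AE_I2)
    qed
  qed
  moreover have "\<forall>\<^sub>F r in sequentially. integral\<^sup>L \<mu> (s r) = partial (risk d H f \<mu> (R r)) \<phi> k"
    using eventually_ge_at_top[of "1::nat"]
  proof eventually_elim
    case (elim r)
    have "s r = (\<lambda>y. 2 * (f y - net d H (R r) \<phi> y) * (- dnet d H (R r) (deriv (R r)) \<phi> k y))"
      by (simp add: s_def fun_eq_iff)
    then show ?case using partial_eq[OF elim P] by simp
  qed
  ultimately show ?thesis using Lim_transform_eventually by fastforce
qed

end


lemma idx_inj:
  fixes p q j j' d :: nat
  assumes "1 \<le> j" "j \<le> d" "1 \<le> j'" "j' \<le> d" "p * d + j' = q * d + j"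
  shows "p = q"
proof (rule ccontr)
  assume "p \<noteq> q"
  then consider "Suc p \<le> q" | "Suc q \<le> p" by linarith
  then show False
  proof cases
    case 1
    then have "Suc p * d \<le> q * d" by (rule mult_le_mono1)
    then have "p * d + d \<le> q * d" by simp
    then show False using assms by linarith
  next
    case 2
    then have "Suc q * d \<le> p * d" by (rule mult_le_mono1)
    then have "q * d + d \<le> p * d" by simp
    then show False using assms by linarith
  qed
qed

lemma le_Hd:
  fixes i j d H :: nat
  assumes "1 \<le> i" "i \<le> H" "j \<le> d"
  shows "(i - 1) * d + j \<le> H * d"
proof -
  have "(i - 1) * d + d = i * d" using assms(1) by (cases i) auto
  moreover have "i * d \<le> H * d" using assms(2) by (rule mult_le_mono1)
  ultimately show ?thesis using assms(3) by linarith
qed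

lemma ee0: "m \<noteq> k \<Longrightarrow> ee k m = 0" by (simp add: ee_def)

lemma dz_w0:
  assumes i: "i \<in> {1..H}" and l: "l \<in> {1..H}" and li: "l \<noteq> i" and j: "j \<in> {1..d}"
  shows "dz d H ((i - 1) * d + j) l y = 0"
proof -
  have "(i - 1) * d + j \<le> H * d" using i j by (intro le_Hd) auto
  moreover have "1 \<le> l" using l by simp
  ultimately have "H * d + l \<noteq> (i - 1) * d + j" by linarith
  then have 1: "ee ((i - 1) * d + j) (H * d + l) = 0" by (rule ee0)
  have 2: "ee ((i - 1) * d + j) ((l - 1) * d + j') * y j' = 0" if "j' \<in> {1..d}" for j'
  proof -
    have "(l - 1) * d + j' \<noteq> (i - 1) * d + j"
    proof
      assume eq: "(l - 1) * d + j' = (i - 1) * d + j"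
      have "1 \<le> j" "j \<le> d" "1 \<le> j'" "j' \<le> d" using j that by simp_all
      then have "l - 1 = i - 1" using eq by (rule idx_inj)
      then show False using i l li by auto
    qed
    then show ?thesis by (simp add: ee0)
  qed
  have "(\<Sum>j'=1..d. ee ((i - 1) * d + j) ((l - 1) * d + j') * y j') = 0"
    by (rule sum.neutral) (use 2 in blast)
  then show ?thesis unfolding dz_def 1 by simp
qed

lemma dz_b0:
  assumes i: "i \<in> {1..H}" and l: "l \<in> {1..H}" and li: "l \<noteq> i"
  shows "dz d H (H * d + i) l y = 0"
proof -
  have 1: "ee (H * d + i) (H * d + l) = 0" using li by (intro ee0) simp
  have 2: "ee (H * d + i) ((l - 1) * d + j') * y j' = 0" if "j' \<in> {1..d}" for j'
  proof -
    have "(l - 1) * d + j' \<le> H * d" using l that by (intro le_Hd) auto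
    moreover have "1 \<le> i" using i by simp
    ultimately have "(l - 1) * d + j' \<noteq> H * d + i" by linarith
    then show ?thesis by (simp add: ee0)
  qed
  have "(\<Sum>j'=1..d. ee (H * d + i) ((l - 1) * d + j') * y j') = 0"
    by (rule sum.neutral) (use 2 in blast)
  then show ?thesis unfolding dz_def 1 by simp
qed

context nnset begin

lemma Gf_cont:
  assumes U: "\<forall>n m. \<bar>u n m\<bar> \<le> P" and T: "\<forall>m. \<bar>\<theta> m\<bar> \<le> P"
    and conv: "\<And>m. (\<lambda>n. u n m) \<longlonglongrightarrow> \<theta> m"
    and ae: "AE y in \<mu>. \<forall>l\<in>{1..H}. dz d H k l y \<noteq> 0 \<longrightarrow> zz d H \<theta> l y \<noteq> 0"
  shows "(\<lambda>n. Gf (u n) k) \<longlonglongrightarrow> Gf \<theta> k"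
proof -
  obtain Fb where Fb: "\<forall>y\<in>space \<mu>. \<bar>f y\<bar> \<le> Fb" using Fb_ex by blast
  define X where "X = P + real d * (P * Mb)"
  define W where "W = 2 * (Fb + (P + real H * (P * X))) * (1 + real H * (1 * X + P * 1 * (1 + real d * (1 * Mb))))"
  have mxb: "\<forall>x. \<bar>x\<bar> \<le> X \<longrightarrow> \<bar>max x 0\<bar> \<le> X" by auto
  have indb: "\<forall>x. \<bar>x\<bar> \<le> X \<longrightarrow> \<bar>indicator {0<..} x :: real\<bar> \<le> 1" by (auto simp: indicator_def)
  have cmx: "isCont (\<lambda>x::real. max x 0) x" for x by (intro continuous_intros)
  show ?thesis unfolding Gf_def
  proof (rule integral_dominated_convergence[where w="\<lambda>_. W"])
    show "(\<lambda>y. 2 * (f y - net d H (\<lambda>x. max x 0) \<theta> y) * (- dnet d H (\<lambda>x. max x 0) (indicator {0<..}) \<theta> k y))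
       \<in> borel_measurable \<mu>"
      using net_meas[OF mx_meas] dnet_meas[OF mx_meas ind_meas] by measurable
    show "(\<lambda>y. 2 * (f y - net d H (\<lambda>x. max x 0) (u n) y) * (- dnet d H (\<lambda>x. max x 0) (indicator {0<..}) (u n) k y))
       \<in> borel_measurable \<mu>" for n
      using net_meas[OF mx_meas] dnet_meas[OF mx_meas ind_meas] by measurable
    show "integrable \<mu> (\<lambda>_. W)" using mu_fin finite_measure.integrable_const by blast
    show "AE y in \<mu>. (\<lambda>n. 2 * (f y - net d H (\<lambda>x. max x 0) (u n) y) * (- dnet d H (\<lambda>x. max x 0) (indicator {0<..}) (u n) k y))
       \<longlonglongrightarrow> 2 * (f y - net d H (\<lambda>x. max x 0) \<theta> y) * (- dnet d H (\<lambda>x. max x 0) (indicator {0<..}) \<theta> k y)"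
      using ae
    proof eventually_elim
      case (elim y)
      show ?case
        by (intro tendsto_intros net_tendsto_par[OF conv cmx] dnet_tendsto_par[OF conv elim])
    qed
    show "AE y in \<mu>. norm (2 * (f y - net d H (\<lambda>x. max x 0) (u n) y) * (- dnet d H (\<lambda>x. max x 0) (indicator {0<..}) (u n) k y)) \<le> W" for n
    proof (rule AE_I2)
      fix y assume y: "y \<in> space \<mu>"
      have Pn: "\<forall>m. \<bar>u n m\<bar> \<le> P" using U by auto
      have "\<bar>net d H (\<lambda>x. max x 0) (u n) y\<bar> \<le> P + real H * (P * X)"
        by (rule net_bound[OF Pn Y[OF y]]) (use mxb X_def in auto)
      moreover have "\<bar>dnet d H (\<lambda>x. max x 0) (indicator {0<..}) (u n) k y\<bar> \<le> 1 + real H * (1 * X + P * 1 * (1 + real d * (1 * Mb)))"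
        by (rule dnet_bound[OF Pn Y[OF y]]) (use mxb indb X_def in auto)
      moreover have "\<bar>f y\<bar> \<le> Fb" using Fb y by auto
      ultimately have "\<bar>2 * (f y - net d H (\<lambda>x. max x 0) (u n) y)\<bar> \<le> 2 * (Fb + (P + real H * (P * X)))"
        and "\<bar>- dnet d H (\<lambda>x. max x 0) (indicator {0<..}) (u n) k y\<bar> \<le> 1 + real H * (1 * X + P * 1 * (1 + real d * (1 * Mb)))"
        by auto
      then show "norm (2 * (f y - net d H (\<lambda>x. max x 0) (u n) y) * (- dnet d H (\<lambda>x. max x 0) (indicator {0<..}) (u n) k y)) \<le> W"
        unfolding W_def real_norm_def by (rule abs_mult_le)
    qed
  qed
qed

lemma ae_zz:
  assumes ac: "absolutely_continuous (leb_cube d a b) \<mu>"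
    and nd: "\<bar>bias d H \<theta> i\<bar> + (\<Sum>j=1..d. \<bar>wgt d \<theta> i j\<bar>) > 0"
  shows "AE y in \<mu>. zz d H \<theta> i y \<noteq> 0"
proof (cases "\<forall>j\<in>{1..d}. wgt d \<theta> i j = 0")
  case True
  then have "bias d H \<theta> i \<noteq> 0" using nd by simp
  then show ?thesis using True by (intro AE_I2) (simp add: zz_def)
next
  case False
  then obtain j0 where j0: "j0 \<in> {1..d}" "wgt d \<theta> i j0 \<noteq> 0" by blast
  let ?P = "PiM {1..d} (\<lambda>_. lborel::real measure)"
  define N where "N = {y \<in> space ?P. bias d H \<theta> i + (\<Sum>j=1..d. wgt d \<theta> i j * y j) = 0}"
  have "N \<in> null_sets ?P" unfolding N_def
    by (rule hyperplane_null[where w="\<lambda>j. wgt d \<theta> i j", OF j0])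
  then have "N \<inter> cube d a b \<in> null_sets ?P" using cube_sets by (rule null_set_Int2)
  then have "N \<inter> cube d a b \<in> null_sets (leb_cube d a b)"
    unfolding leb_cube_def using null_sets_restrict_space[OF cube_sets] by auto
  then have "N \<inter> cube d a b \<in> null_sets \<mu>" using ac unfolding absolutely_continuous_def by auto
  from AE_not_in[OF this] AE_space show ?thesis
  proof eventually_elim
    case (elim y)
    then have "y \<in> space ?P" unfolding sp cube_def by (auto simp: space_PiM)
    then show ?case using elim unfolding N_def zz_def sp by auto
  qed
qed

end


theorem lemma2p13:
  fixes d H dd :: nat and a b :: real
    and f :: "(nat \<Rightarrow> real) \<Rightarrow> real"
    and R :: "nat \<Rightarrow> real \<Rightarrow> real"
    and \<mu> :: "(nat \<Rightarrow> real) measure"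
    and G :: "(nat \<Rightarrow> real) \<Rightarrow> nat \<Rightarrow> real"
    and \<theta> :: "nat \<Rightarrow> real" and i :: nat
  assumes d_pos: "d \<ge> 1" and H_pos: "H \<ge> 1"
    and dd_def: "dd = d * H + 2 * H + 1"
    and ab: "a < b"
    and f_cont: "continuous_on (cube d a b) f"
    and R_C1: "\<forall>r\<ge>1. (\<forall>x. R r differentiable at x) \<and> continuous_on UNIV (deriv (R r))"
    and R_lim: "\<forall>x. (\<lambda>r. \<bar>R r x - max x 0\<bar> + \<bar>deriv (R r) x - indicator {0<..} x\<bar>)
                      \<longlonglongrightarrow> 0"
    and R_bd: "\<forall>x. \<exists>C. \<forall>r\<ge>1. \<forall>y\<in>{-\<bar>x\<bar>..\<bar>x\<bar>}. \<bar>deriv (R r) y\<bar> \<le> C"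
    and mu_sets: "sets \<mu> = sets (leb_cube d a b)"
    and mu_fin: "finite_measure \<mu>"
    and mu_ac: "absolutely_continuous (leb_cube d a b) \<mu>"
    and G_def: "\<forall>\<phi>\<in>param_space dd.
        (\<forall>k\<in>{1..dd}. convergent (\<lambda>r. partial (risk d H f \<mu> (R r)) \<phi> k)) \<longrightarrow>
        (\<forall>k\<in>{1..dd}. G \<phi> k = lim (\<lambda>r. partial (risk d H f \<mu> (R r)) \<phi> k))"
    and \<theta>_in: "\<theta> \<in> param_space dd"
    and i_in: "i \<in> {1..H}"
    and nondeg: "\<bar>bias d H \<theta> i\<bar> + (\<Sum>j=1..d. \<bar>wgt d \<theta> i j\<bar>) > 0"
  shows "(\<forall>j\<in>{1..d}. continuous (at \<theta> within param_space dd) (\<lambda>\<phi>. G \<phi> ((i - 1) * d + j)))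
       \<and> continuous (at \<theta> within param_space dd) (\<lambda>\<phi>. G \<phi> (H * d + i))"
proof -
  interpret nnset d H a b f R \<mu>
    using f_cont R_C1 R_lim R_bd mu_sets mu_fin by (rule nnset.intro)
  have Pb: "\<forall>m. \<bar>\<phi> m\<bar> \<le> (\<Sum>m'\<in>{1..dd}. \<bar>\<phi> m'\<bar>)" if "\<phi> \<in> param_space dd" for \<phi>
  proof
    fix m
    show "\<bar>\<phi> m\<bar> \<le> (\<Sum>m'\<in>{1..dd}. \<bar>\<phi> m'\<bar>)"
    proof (cases "m \<in> {1..dd}")
      case True
      then show ?thesis by (intro member_le_sum) auto
    next
      case False
      then have "\<phi> m = 0" using that by (auto simp: param_space_def)
      then show ?thesis by (simp add: sum_nonneg)
    qed
  qed
  have Geq: "G \<phi> k = Gf \<phi> k" if "\<phi> \<in> param_space dd" "k \<in> {1..dd}" for \<phi> k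
  proof -
    have lim: "(\<lambda>r. partial (risk d H f \<mu> (R r)) \<phi> k') \<longlonglongrightarrow> Gf \<phi> k'" for k'
      by (rule G_lim[OF Pb[OF that(1)]])
    then have "\<forall>k'\<in>{1..dd}. convergent (\<lambda>r. partial (risk d H f \<mu> (R r)) \<phi> k')"
      by (auto simp: convergent_def)
    then have "G \<phi> k = lim (\<lambda>r. partial (risk d H f \<mu> (R r)) \<phi> k)"
      using G_def that by blast
    then show ?thesis using lim limI by metis
  qed
  have cont_k: "continuous (at \<theta> within param_space dd) (\<lambda>\<phi>. G \<phi> k)"
    if k: "k \<in> {1..dd}" and ae: "AE y in \<mu>. \<forall>l\<in>{1..H}. dz d H k l y \<noteq> 0 \<longrightarrow> zz d H \<theta> l y \<noteq> 0" for k
  proof (rule continuous_within_sequentiallyI)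
    fix u :: "nat \<Rightarrow> nat \<Rightarrow> real" assume u: "u \<longlonglongrightarrow> \<theta>" and uS: "\<forall>n. u n \<in> param_space dd"
    have conv: "(\<lambda>n. u n m) \<longlonglongrightarrow> \<theta> m" for m
    proof -
      have c: "continuous_on UNIV (\<lambda>x::nat \<Rightarrow> real. x m)" by (rule continuous_on_product_coordinates)
      have "isCont (\<lambda>x::nat \<Rightarrow> real. x m) \<theta>"
        using c continuous_on_eq_continuous_at[OF open_UNIV] by blast
      then show ?thesis using isCont_tendsto_compose[OF _ u] by blast
    qed
    have "\<exists>B. \<forall>n. \<bar>u n m\<bar> \<le> B" for m
    proof -
      have "Bseq (\<lambda>n. u n m)" using conv by (intro convergent_imp_Bseq) (auto simp: convergent_def)
      then show ?thesis by (auto simp: Bseq_def)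
    qed
    then obtain B where B: "\<And>m n. \<bar>u n m\<bar> \<le> B m" by metis
    define P where "P = (\<Sum>m\<in>{1..dd}. \<bar>B m\<bar> + \<bar>\<theta> m\<bar>)"
    have P0: "0 \<le> P" unfolding P_def by (intro sum_nonneg) auto
    have U: "\<forall>n m. \<bar>u n m\<bar> \<le> P"
    proof (intro allI)
      fix n m
      show "\<bar>u n m\<bar> \<le> P"
      proof (cases "m \<in> {1..dd}")
        case True
        have "\<bar>B m\<bar> + \<bar>\<theta> m\<bar> \<le> P" unfolding P_def
          using True by (intro member_le_sum[of m "{1..dd}" "\<lambda>m. \<bar>B m\<bar> + \<bar>\<theta> m\<bar>"]) auto
        then show ?thesis using B[of n m] by linarith
      next
        case False
        then have "u n m = 0" using uS by (auto simp: param_space_def)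
        then show ?thesis using P0 by simp
      qed
    qed
    have T: "\<forall>m. \<bar>\<theta> m\<bar> \<le> P"
    proof
      fix m
      show "\<bar>\<theta> m\<bar> \<le> P"
      proof (cases "m \<in> {1..dd}")
        case True
        have "\<bar>B m\<bar> + \<bar>\<theta> m\<bar> \<le> P" unfolding P_def
          using True by (intro member_le_sum[of m "{1..dd}" "\<lambda>m. \<bar>B m\<bar> + \<bar>\<theta> m\<bar>"]) auto
        then show ?thesis by linarith
      next
        case False
        then have "\<theta> m = 0" using \<theta>_in by (auto simp: param_space_def)
        then show ?thesis using P0 by simp
      qed
    qed
    have "(\<lambda>n. Gf (u n) k) \<longlonglongrightarrow> Gf \<theta> k" by (rule Gf_cont[OF U T conv ae])
    moreover have "G (u n) k = Gf (u n) k" for n using Geq[OF _ k] uS by blast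
    moreover have "G \<theta> k = Gf \<theta> k" using Geq[OF \<theta>_in k] .
    ultimately show "(\<lambda>n. G (u n) k) \<longlonglongrightarrow> G \<theta> k" by simp
  qed
  have aei: "AE y in \<mu>. zz d H \<theta> i y \<noteq> 0" by (rule ae_zz[OF mu_ac nondeg])
  have iH: "1 \<le> i" "i \<le> H" using i_in by auto
  show ?thesis
  proof (intro conjI ballI)
    fix j assume j: "j \<in> {1..d}"
    have "(i - 1) * d + j \<le> H * d" using iH j by (intro le_Hd) auto
    then have k: "(i - 1) * d + j \<in> {1..dd}" using j unfolding dd_def by (auto simp: mult.commute)
    show "continuous (at \<theta> within param_space dd) (\<lambda>\<phi>. G \<phi> ((i - 1) * d + j))"
    proof (rule cont_k[OF k])
      show "AE y in \<mu>. \<forall>l\<in>{1..H}. dz d H ((i - 1) * d + j) l y \<noteq> 0 \<longrightarrow> zz d H \<theta> l y \<noteq> 0"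
        using aei
      proof eventually_elim
        case (elim y)
        show ?case
        proof (intro ballI impI)
          fix l assume l: "l \<in> {1..H}" and nz: "dz d H ((i - 1) * d + j) l y \<noteq> 0"
          then have "l = i" using dz_w0[OF i_in l _ j] by blast
          then show "zz d H \<theta> l y \<noteq> 0" using elim by simp
        qed
      qed
    qed
  next
    have k: "H * d + i \<in> {1..dd}" using iH unfolding dd_def by (auto simp: mult.commute)
    show "continuous (at \<theta> within param_space dd) (\<lambda>\<phi>. G \<phi> (H * d + i))"
    proof (rule cont_k[OF k])
      show "AE y in \<mu>. \<forall>l\<in>{1..H}. dz d H (H * d + i) l y \<noteq> 0 \<longrightarrow> zz d H \<theta> l y \<noteq> 0"
        using aei
      proof eventually_elim
        case (elim y)
        show ?case
        proof (intro ballI impI)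
          fix l assume l: "l \<in> {1..H}" and nz: "dz d H (H * d + i) l y \<noteq> 0"
          then have "l = i" using dz_b0[OF i_in l] by blast
          then show "zz d H \<theta> l y \<noteq> 0" using elim by simp
        qed
      qed
    qed
  qed
qed


end
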